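(* Suppose the total Pauli channel is a composition of independent single-Pauli channels, $$\mathcal N(\rho)=\circ_{e\in\mathcal E_\Gamma}\mathcal N^{(e)}(\rho),\qquad \mathcal N^{(e)}(\rho)=(1-p_e)\rho+p_e\,e\rho e^\dagger,$$ with $0<p_e<1/2$. Then for every nontrivial syndrome class $C$, the detector error rate $P^{\mathrm{detect}}_C$, i.e. the probability that an odd number of the errors in $C$ occur, can be learned exactly from the syndrome expectation values $\Lambda(M)$, $M\in\mathcal M$.
   Context: $\mathcal P_n$ is the $n$-qubit Pauli group without phases; $[[A,B]]=\pm1$ according to commutation, $\langle A,B\rangle\in\{0,1\}$ is $0$ iff they commute. $\mathcal E_\Gamma$ is a finite list of non-identity Pauli errors (the same operator may appear several times as distinct elements). A stabilizer code has measured stabilizer subgroup $\mathcal M$; codewords are prepared, the channel applied and $\mathcal M$'s generators measured perfectly, giving syndrome expectation values $\Lambda(M)=\sum_eP(e)[[e,M]]$ where $P$ is the total error distribution. Syndrome classes partition $\mathcal E_\Gamma$ by equality of $(\langle e,M\rangle)_{M\in\mathcal M}$; a class is nontrivial if its syndrome is nonzero. "Learned exactly" means uniquely determined by the values $(\Lambda(M))_{M\in\mathcal M}$ among all channels of the stated form. *)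

theory Defs
  imports Complex_Main
begin

text \<open>An n-qubit Pauli operator without phase, in symplectic form: qubit i carries
  (x_i, z_i); X = (True,False), Z = (False,True), Y = (True,True), I = (False,False).\<close>
type_synonym pauli = "nat \<Rightarrow> bool \<times> bool"

definition paulis :: "nat \<Rightarrow> pauli set" where
  "paulis n = {P. \<forall>i\<ge>n. P i = (False, False)}"

definition pid :: pauli where
  "pid = (\<lambda>i. (False, False))"

definition pmult :: "pauli \<Rightarrow> pauli \<Rightarrow> pauli" where
  "pmult P Q = (\<lambda>i. (fst (P i) \<noteq> fst (Q i), snd (P i) \<noteq> snd (Q i)))"

text \<open>Symplectic form: 0 iff A and B commute, 1 otherwise.\<close>
definition symp_form :: "nat \<Rightarrow> pauli \<Rightarrow> pauli \<Rightarrow> nat" where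
  "symp_form n A B = (card {i. i < n \<and> fst (A i) \<and> snd (B i)}
                + card {i. i < n \<and> snd (A i) \<and> fst (B i)}) mod 2"

definition comm_sign :: "nat \<Rightarrow> pauli \<Rightarrow> pauli \<Rightarrow> real" where
  "comm_sign n A B = (if symp_form n A B = 0 then 1 else -1)"

definition stabilizer_group :: "nat \<Rightarrow> pauli set \<Rightarrow> bool" where
  "stabilizer_group n MM \<longleftrightarrow> MM \<subseteq> paulis n \<and> pid \<in> MM
     \<and> (\<forall>A\<in>MM. \<forall>B\<in>MM. pmult A B \<in> MM)
     \<and> (\<forall>A\<in>MM. \<forall>B\<in>MM. symp_form n A B = 0)"

definition prod_errs :: "pauli list \<Rightarrow> nat set \<Rightarrow> pauli" where
  "prod_errs E S = foldr pmult (map (\<lambda>j. E ! j) (filter (\<lambda>j. j \<in> S) [0..<length E])) pid"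

definition occur_prob :: "(nat \<Rightarrow> real) \<Rightarrow> nat \<Rightarrow> nat set \<Rightarrow> real" where
  "occur_prob p m S = (\<Prod>j\<in>S. p j) * (\<Prod>j\<in>{0..<m} - S. 1 - p j)"

definition total_dist :: "pauli list \<Rightarrow> (nat \<Rightarrow> real) \<Rightarrow> pauli \<Rightarrow> real" where
  "total_dist E p e = (\<Sum>S\<in>Pow {0..<length E}.
       if prod_errs E S = e then occur_prob p (length E) S else 0)"

definition syndrome_exp :: "nat \<Rightarrow> pauli list \<Rightarrow> (nat \<Rightarrow> real) \<Rightarrow> pauli \<Rightarrow> real" where
  "syndrome_exp n E p M = (\<Sum>e\<in>paulis n. total_dist E p e * comm_sign n e M)"

definition syndrome :: "nat \<Rightarrow> pauli set \<Rightarrow> pauli \<Rightarrow> pauli \<Rightarrow> nat" where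
  "syndrome n MM e = (\<lambda>M. if M \<in> MM then symp_form n e M else 0)"

definition syndrome_class :: "nat \<Rightarrow> pauli set \<Rightarrow> pauli list \<Rightarrow> nat \<Rightarrow> nat set" where
  "syndrome_class n MM E i = {j. j < length E \<and> syndrome n MM (E ! j) = syndrome n MM (E ! i)}"

definition detect_rate :: "pauli list \<Rightarrow> (nat \<Rightarrow> real) \<Rightarrow> nat set \<Rightarrow> real" where
  "detect_rate E p C = (\<Sum>S\<in>Pow {0..<length E}.
       if odd (card (S \<inter> C)) then occur_prob p (length E) S else 0)"

definition valid_rates :: "pauli list \<Rightarrow> (nat \<Rightarrow> real) \<Rightarrow> bool" where
  "valid_rates E p \<longleftrightarrow> (\<forall>j<length E. 0 < p j \<and> p j < 1/2)"

end

theory Submission imports Defs Complex_Main begin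

lemma sign_pow: "(\<Prod>i<(n::nat). if P i then -1 else (1::real)) = (-1)^card {i. i<n \<and> P i}"
proof -
  have "(\<Prod>i<n. if P i then -1 else (1::real)) = (\<Prod>i\<in>{..<n} \<inter> {x. P x}. -1) * (\<Prod>i\<in>{..<n} \<inter> - {x. P x}. 1)"
    using prod.If_cases[of "{..<n}" P "\<lambda>_. -1" "\<lambda>_. 1"] by simp
  also have "{..<n} \<inter> {x. P x} = {i. i<n \<and> P i}" by auto
  finally show ?thesis by simp
qed

lemma neg1_pow: "(-1::real)^k = (if k mod 2 = 0 then 1 else -1)"
  by (simp add: minus_one_power_iff even_iff_mod_2_eq_zero)

definition cfac :: "bool \<times> bool \<Rightarrow> bool \<times> bool \<Rightarrow> real" where
  "cfac a b = (if fst a \<and> snd b then -1 else 1) * (if snd a \<and> fst b then -1 else 1)"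

lemma cs_prod: "comm_sign n A B = (\<Prod>i<n. cfac (A i) (B i))"
proof -
  have "(\<Prod>i<n. cfac (A i) (B i)) = (\<Prod>i<n. if fst (A i) \<and> snd (B i) then -1 else (1::real)) *
     (\<Prod>i<n. if snd (A i) \<and> fst (B i) then -1 else (1::real))"
    unfolding cfac_def by (rule prod.distrib)
  also have "\<dots> = (-1) ^ (card {i. i < n \<and> fst (A i) \<and> snd (B i)}
                + card {i. i < n \<and> snd (A i) \<and> fst (B i)})"
    by (simp add: sign_pow power_add)
  also have "\<dots> = comm_sign n A B"
    unfolding comm_sign_def symp_form_def neg1_pow ..
  finally show ?thesis by simp
qed

lemma cs_mult1: "comm_sign n (pmult A A') B = comm_sign n A B * comm_sign n A' B"
  unfolding cs_prod prod.distrib[symmetric]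
  by (rule prod.cong) (auto simp: cfac_def pmult_def)

lemma cs_mult2: "comm_sign n B (pmult A A') = comm_sign n B A * comm_sign n B A'"
  unfolding cs_prod prod.distrib[symmetric]
  by (rule prod.cong) (auto simp: cfac_def pmult_def)

lemma cs_pid: "comm_sign n pid B = 1"
  unfolding cs_prod by (simp add: cfac_def pid_def)

lemma cs_vals: "comm_sign n A B = 1 \<or> comm_sign n A B = -1"
  by (simp add: comm_sign_def)

lemma sf_real: "real (symp_form n A B) = (1 - comm_sign n A B) / 2"
proof -
  have "symp_form n A B < 2" unfolding symp_form_def by simp
  then show ?thesis unfolding comm_sign_def by (cases "symp_form n A B") auto
qed

lemma finite_paulis: "finite (paulis n)"
proof (rule finite_imageD)
  show "inj_on (\<lambda>P. map P [0..<n]) (paulis n)"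
  proof (rule inj_onI)
    fix P Q assume "P \<in> paulis n" "Q \<in> paulis n" "map P [0..<n] = map Q [0..<n]"
    note h = this
    show "P = Q"
    proof (rule ext)
      fix i show "P i = Q i"
      proof (cases "i < n")
        case True
        then have "map P [0..<n] ! i = map Q [0..<n] ! i" using h(3) by simp
        then show ?thesis using True by simp
      next
        case False
        then show ?thesis using h(1,2) by (simp add: paulis_def)
      qed
    qed
  qed
  have "(\<lambda>P. map P [0..<n]) ` paulis n \<subseteq> {xs. set xs \<subseteq> UNIV \<and> length xs = n}" by auto
  then show "finite ((\<lambda>P. map P [0..<n]) ` paulis n)"
    by (rule finite_subset) (rule finite_lists_length_eq, simp)
qed

lemma pmult_paulis: "A \<in> paulis n \<Longrightarrow> B \<in> paulis n \<Longrightarrow> pmult A B \<in> paulis n"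
  unfolding paulis_def pmult_def by auto

lemma pid_paulis: "pid \<in> paulis n"
  unfolding paulis_def pid_def by auto

lemma foldr_cs: "comm_sign n (foldr pmult (map (\<lambda>j. E ! j) js) pid) M = prod_list (map (\<lambda>j. comm_sign n (E!j) M) js)"
  by (induction js) (auto simp: cs_mult1 cs_pid)

lemma foldr_paulis: "\<forall>j\<in>set js. E ! j \<in> paulis n \<Longrightarrow> foldr pmult (map (\<lambda>j. E ! j) js) pid \<in> paulis n"
  by (induction js) (auto simp: pmult_paulis pid_paulis)


lemma prod_errs_paulis: "\<forall>e\<in>set E. e \<in> paulis n \<Longrightarrow> prod_errs E S \<in> paulis n"
  unfolding prod_errs_def by (rule foldr_paulis) auto

lemma prod_errs_cs: "S \<subseteq> {0..<length E} \<Longrightarrow>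
   comm_sign n (prod_errs E S) M = (\<Prod>j\<in>S. comm_sign n (E!j) M)"
proof -
  assume S: "S \<subseteq> {0..<length E}"
  have st: "set (filter (\<lambda>j. j \<in> S) [0..<length E]) = S" using S by auto
  have "comm_sign n (prod_errs E S) M = prod_list (map (\<lambda>j. comm_sign n (E!j) M) (filter (\<lambda>j. j \<in> S) [0..<length E]))"
    unfolding prod_errs_def by (rule foldr_cs)
  also have "\<dots> = (\<Prod>j\<in>set (filter (\<lambda>j. j \<in> S) [0..<length E]). comm_sign n (E!j) M)"
    by (rule prod.distinct_set_conv_list[symmetric]) simp
  finally show ?thesis unfolding st .
qed

lemma synd_formula:
  assumes "\<forall>e\<in>set E. e \<in> paulis n"
  shows "syndrome_exp n E p M = (\<Prod>j\<in>{0..<length E}. p j * comm_sign n (E!j) M + (1 - p j))"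
proof -
  let ?A = "{0..<length E}"
  have "syndrome_exp n E p M = (\<Sum>e\<in>paulis n. \<Sum>S\<in>Pow ?A.
       (if prod_errs E S = e then occur_prob p (length E) S * comm_sign n (prod_errs E S) M else 0))"
    unfolding syndrome_exp_def total_dist_def sum_distrib_right
    by (intro sum.cong refl) simp
  also have "\<dots> = (\<Sum>S\<in>Pow ?A. \<Sum>e\<in>paulis n.
       (if prod_errs E S = e then occur_prob p (length E) S * comm_sign n (prod_errs E S) M else 0))"
    by (rule sum.swap)
  also have "\<dots> = (\<Sum>S\<in>Pow ?A. occur_prob p (length E) S * comm_sign n (prod_errs E S) M)"
    using prod_errs_paulis[OF assms] finite_paulis by (intro sum.cong refl) (simp add: sum.delta)
  also have "\<dots> = (\<Sum>S\<in>Pow ?A. (\<Prod>j\<in>S. p j * comm_sign n (E!j) M) * (\<Prod>j\<in>?A - S. 1 - p j))"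
    unfolding occur_prob_def
    by (intro sum.cong refl) (simp add: prod_errs_cs prod.distrib)
  also have "\<dots> = (\<Prod>j\<in>?A. p j * comm_sign n (E!j) M + (1 - p j))"
    by (rule prod_add[symmetric]) simp
  finally show ?thesis .
qed

lemma char_sum:
  assumes "stabilizer_group n MM" and "M0 \<in> MM" and "symp_form n Q M0 \<noteq> 0"
  shows "(\<Sum>M\<in>MM. comm_sign n Q M) = 0"
proof -
  have inv: "pmult M0 (pmult M0 M) = M" for M
    unfolding pmult_def by (auto simp: fun_eq_iff prod_eq_iff)
  have cl: "M \<in> MM \<Longrightarrow> pmult M0 M \<in> MM" for M
    using assms(1,2) unfolding stabilizer_group_def by blast
  have bij: "bij_betw (pmult M0) MM MM"
    by (rule bij_betw_byWitness[where f'="pmult M0"]) (auto simp: cl inv)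
  have m1: "comm_sign n Q M0 = -1" using assms(3) by (simp add: comm_sign_def)
  have "(\<Sum>M\<in>MM. comm_sign n Q M) = (\<Sum>M\<in>MM. comm_sign n Q (pmult M0 M))"
    using sum.reindex_bij_betw[OF bij, of "comm_sign n Q"] by simp
  also have "\<dots> = - (\<Sum>M\<in>MM. comm_sign n Q M)"
    by (simp add: cs_mult2 m1 sum_negf)
  finally show ?thesis by simp
qed


lemma detect_formula:
  assumes "C \<subseteq> {0..<length E}"
  shows "detect_rate E p C = (1 - (\<Prod>j\<in>C. 1 - 2 * p j)) / 2"
proof -
  let ?A = "{0..<length E}"
  let ?o = "occur_prob p (length E)"
  let ?sg = "\<lambda>j. if j \<in> C then -1 else (1::real)"
  have sg: "(\<Prod>j\<in>S. ?sg j) = (-1) ^ card (S \<inter> C)" if "S \<subseteq> ?A" for S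
  proof -
    have "finite S" using that finite_subset by blast
    then have "(\<Prod>j\<in>S. ?sg j) = (\<Prod>j\<in>S \<inter> {x. x \<in> C}. -1) * (\<Prod>j\<in>S \<inter> - {x. x \<in> C}. 1)"
      by (rule prod.If_cases)
    then show ?thesis by (simp add: Int_def)
  qed
  have "detect_rate E p C = (\<Sum>S\<in>Pow ?A. ?o S * (1 - (-1) ^ card (S \<inter> C)) / 2)"
    unfolding detect_rate_def by (intro sum.cong refl) auto
  also have "\<dots> = ((\<Sum>S\<in>Pow ?A. ?o S) - (\<Sum>S\<in>Pow ?A. ?o S * (-1) ^ card (S \<inter> C))) / 2"
    by (simp add: sum_divide_distrib[symmetric] sum_subtractf[symmetric] right_diff_distrib)
  also have "(\<Sum>S\<in>Pow ?A. ?o S) = (\<Prod>j\<in>?A. p j + (1 - p j))"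
    unfolding occur_prob_def by (rule prod_add[symmetric]) simp
  also have "\<dots> = 1" by simp
  also have "(\<Sum>S\<in>Pow ?A. ?o S * (-1) ^ card (S \<inter> C)) =
      (\<Sum>S\<in>Pow ?A. (\<Prod>j\<in>S. p j * ?sg j) * (\<Prod>j\<in>?A - S. 1 - p j))"
    unfolding occur_prob_def prod.distrib by (intro sum.cong refl) (simp add: sg)
  also have "\<dots> = (\<Prod>j\<in>?A. p j * ?sg j + (1 - p j))"
    by (rule prod_add[symmetric]) simp
  also have "\<dots> = (\<Prod>j\<in>?A. if j \<in> C then 1 - 2 * p j else 1)"
    by (intro prod.cong refl) auto
  also have "\<dots> = (\<Prod>j\<in>C. 1 - 2 * p j)"
    using assms by (subst prod.If_cases) (auto simp: Int_absorb1 Int_def[symmetric])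
  finally show ?thesis .
qed


lemma exp_form:
  assumes "\<forall>e\<in>set E. e \<in> paulis n" and "valid_rates E p"
  shows "syndrome_exp n E p M =
     exp (\<Sum>j\<in>{0..<length E}. real (symp_form n (E!j) M) * ln (1 - 2 * p j))"
proof -
  have "syndrome_exp n E p M = (\<Prod>j\<in>{0..<length E}. p j * comm_sign n (E!j) M + (1 - p j))"
    by (rule synd_formula[OF assms(1)])
  also have "\<dots> = (\<Prod>j\<in>{0..<length E}. exp (real (symp_form n (E!j) M) * ln (1 - 2 * p j)))"
  proof (intro prod.cong refl)
    fix j assume "j \<in> {0..<length E}"
    then have "0 < p j" "p j < 1/2" using assms(2) unfolding valid_rates_def by auto
    then show "p j * comm_sign n (E!j) M + (1 - p j) = exp (real (symp_form n (E!j) M) * ln (1 - 2 * p j))"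
      using cs_vals[of n "E!j" M] sf_real[of n "E!j" M] by auto
  qed
  also have "\<dots> = exp (\<Sum>j\<in>{0..<length E}. real (symp_form n (E!j) M) * ln (1 - 2 * p j))"
    by (simp add: exp_sum)
  finally show ?thesis .
qed

lemma coef:
  assumes sg: "stabilizer_group n MM" and ntriv: "\<exists>M\<in>MM. symp_form n (E ! i) M \<noteq> 0"
  shows "(\<Sum>M\<in>MM. comm_sign n (E!i) M * real (symp_form n (E!j) M)) =
     (if syndrome n MM (E!j) = syndrome n MM (E!i) then - real (card MM) / 2 else 0)"
proof -
  have z: "(\<Sum>M\<in>MM. comm_sign n (E!i) M) = 0" using ntriv char_sum[OF sg] by blast
  have "(\<Sum>M\<in>MM. comm_sign n (E!i) M * real (symp_form n (E!j) M)) =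
      ((\<Sum>M\<in>MM. comm_sign n (E!i) M) - (\<Sum>M\<in>MM. comm_sign n (pmult (E!i) (E!j)) M)) / 2"
    by (simp add: sf_real cs_mult1 sum_divide_distrib[symmetric] sum_subtractf[symmetric] right_diff_distrib)
  also have "\<dots> = - (\<Sum>M\<in>MM. comm_sign n (pmult (E!i) (E!j)) M) / 2" using z by simp
  also have "(\<Sum>M\<in>MM. comm_sign n (pmult (E!i) (E!j)) M) =
      (if syndrome n MM (E!j) = syndrome n MM (E!i) then real (card MM) else 0)"
  proof (cases "syndrome n MM (E!j) = syndrome n MM (E!i)")
    case True
    have "comm_sign n (pmult (E!i) (E!j)) M = 1" if "M \<in> MM" for M
    proof -
      have "symp_form n (E!j) M = symp_form n (E!i) M"
        using fun_cong[OF True, of M] that unfolding syndrome_def by simp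
      then have "comm_sign n (E!j) M = comm_sign n (E!i) M" unfolding comm_sign_def by simp
      then show ?thesis using cs_vals[of n "E!i" M] by (auto simp: cs_mult1)
    qed
    then show ?thesis using True by simp
  next
    case False
    then obtain M0 where M0: "M0 \<in> MM" "symp_form n (E!j) M0 \<noteq> symp_form n (E!i) M0"
      unfolding syndrome_def by (metis ext)
    have "real (symp_form n (E!j) M0) \<noteq> real (symp_form n (E!i) M0)" using M0 by simp
    then have "comm_sign n (E!j) M0 \<noteq> comm_sign n (E!i) M0" unfolding sf_real by auto
    then have "comm_sign n (pmult (E!i) (E!j)) M0 = -1"
      using cs_vals[of n "E!i" M0] cs_vals[of n "E!j" M0] by (auto simp: cs_mult1)
    then have "symp_form n (pmult (E!i) (E!j)) M0 \<noteq> 0" unfolding comm_sign_def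
      by (cases "symp_form n (pmult (E!i) (E!j)) M0 = 0") auto
    then show ?thesis using False char_sum[OF sg M0(1)] by simp
  qed
  finally show ?thesis by simp
qed

lemma class_sum:
  assumes sg: "stabilizer_group n MM" and ntriv: "\<exists>M\<in>MM. symp_form n (E ! i) M \<noteq> 0"
  shows "(\<Sum>M\<in>MM. comm_sign n (E!i) M * (\<Sum>j\<in>{0..<length E}. real (symp_form n (E!j) M) * a j)) =
     - real (card MM) / 2 * (\<Sum>j\<in>syndrome_class n MM E i. a j)"
proof -
  have "(\<Sum>M\<in>MM. comm_sign n (E!i) M * (\<Sum>j\<in>{0..<length E}. real (symp_form n (E!j) M) * a j)) =
     (\<Sum>j\<in>{0..<length E}. a j * (\<Sum>M\<in>MM. comm_sign n (E!i) M * real (symp_form n (E!j) M)))"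
    unfolding sum_distrib_left by (subst sum.swap) (simp add: algebra_simps)
  also have "\<dots> = (\<Sum>j\<in>{0..<length E}. if syndrome n MM (E!j) = syndrome n MM (E!i) then - real (card MM) / 2 * a j else 0)"
    by (intro sum.cong refl) (simp add: coef[OF sg ntriv])
  also have "\<dots> = (\<Sum>j\<in>{0..<length E} \<inter> {j. syndrome n MM (E!j) = syndrome n MM (E!i)}. - real (card MM) / 2 * a j)"
    using sum.inter_restrict[of "{0..<length E}" "\<lambda>j. - real (card MM) / 2 * a j"
        "{j. syndrome n MM (E!j) = syndrome n MM (E!i)}"] by simp
  also have "{0..<length E} \<inter> {j. syndrome n MM (E!j) = syndrome n MM (E!i)} = syndrome_class n MM E i"
    unfolding syndrome_class_def by auto
  finally show ?thesis by (simp add: sum_distrib_left)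
qed

theorem lemma7:
  fixes n :: nat and MM :: "pauli set" and E :: "pauli list" and i :: nat
  assumes "stabilizer_group n MM"
    and "\<forall>e\<in>set E. e \<in> paulis n \<and> e \<noteq> pid"
    and "i < length E"
    and "\<exists>M\<in>MM. symp_form n (E ! i) M \<noteq> 0"
  shows "\<forall>p q. valid_rates E p \<longrightarrow> valid_rates E q
           \<longrightarrow> (\<forall>M\<in>MM. syndrome_exp n E p M = syndrome_exp n E q M)
           \<longrightarrow> detect_rate E p (syndrome_class n MM E i)
             = detect_rate E q (syndrome_class n MM E i)"
proof (intro allI impI)
  fix p q
  assume vp: "valid_rates E p" and vq: "valid_rates E q"
    and eq: "\<forall>M\<in>MM. syndrome_exp n E p M = syndrome_exp n E q M"
  let ?C = "syndrome_class n MM E i"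
  have EP: "\<forall>e\<in>set E. e \<in> paulis n" using assms(2) by blast
  have CA: "?C \<subseteq> {0..<length E}" unfolding syndrome_class_def by auto
  define L where "L r M = (\<Sum>j\<in>{0..<length E}. real (symp_form n (E!j) M) * ln (1 - 2 * r j))" for r M
  have LL: "L p M = L q M" if "M \<in> MM" for M
    using eq that exp_form[OF EP vp, of M] exp_form[OF EP vq, of M] unfolding L_def by simp
  have fin: "finite MM" using assms(1) finite_paulis unfolding stabilizer_group_def
    using finite_subset by blast
  have pos: "card MM > 0" using fin assms(1) unfolding stabilizer_group_def
    using card_gt_0_iff by blast
  have "- real (card MM) / 2 * (\<Sum>j\<in>?C. ln (1 - 2 * p j)) = - real (card MM) / 2 * (\<Sum>j\<in>?C. ln (1 - 2 * q j))"
    using class_sum[OF assms(1) assms(4), of "\<lambda>j. ln (1 - 2 * p j)"]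
      class_sum[OF assms(1) assms(4), of "\<lambda>j. ln (1 - 2 * q j)"] LL
    unfolding L_def by (metis (no_types, lifting) sum.cong)
  then have "(\<Sum>j\<in>?C. ln (1 - 2 * p j)) = (\<Sum>j\<in>?C. ln (1 - 2 * q j))" using pos by simp
  then have "exp (\<Sum>j\<in>?C. ln (1 - 2 * p j)) = exp (\<Sum>j\<in>?C. ln (1 - 2 * q j))" by simp
  moreover have "exp (\<Sum>j\<in>?C. ln (1 - 2 * r j)) = (\<Prod>j\<in>?C. 1 - 2 * r j)" if "valid_rates E r" for r
  proof -
    have "exp (\<Sum>j\<in>?C. ln (1 - 2 * r j)) = (\<Prod>j\<in>?C. exp (ln (1 - 2 * r j)))"
      using CA finite_subset by (intro exp_sum) blast
    also have "\<dots> = (\<Prod>j\<in>?C. 1 - 2 * r j)"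
    proof (intro prod.cong refl)
      fix j assume "j \<in> ?C"
      then have "j < length E" using CA by auto
      then have "r j < 1/2" using that unfolding valid_rates_def by auto
      then show "exp (ln (1 - 2 * r j)) = 1 - 2 * r j" by simp
    qed
    finally show ?thesis .
  qed
  ultimately have "(\<Prod>j\<in>?C. 1 - 2 * p j) = (\<Prod>j\<in>?C. 1 - 2 * q j)" using vp vq by simp
  then show "detect_rate E p ?C = detect_rate E q ?C" by (simp add: detect_formula[OF CA])
qed

end
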